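(* Let $P,Q$ be distributions on a space $\mathcal{X}$, let $\mathcal{F}\subseteq\mathbb{R}^{\mathcal{X}}$ be a model class, let $y:\mathcal{X}\to\mathbb{R}$ be a labeling function, and let $\tau=\tau(P,Q,\mathcal{F})$. Suppose there exist $f^\star\in\mathcal{F}$ and $\epsilon_{\mathcal{F}}\ge 0$ with $$\mathbb{E}_{x\sim\frac12(P+Q)}\big[(y(x)-f^\star(x))^2\big]\le \epsilon_{\mathcal{F}}.$$ Then for every $f\in\mathcal{F}$, $$\mathbb{E}_{Q}\big[(y(x)-f(x))^2\big]\le (8\tau+4)\epsilon_{\mathcal{F}}+4\tau\, \mathbb{E}_{P}\big[(y(x)-f(x))^2\big].$$
   Context: For distributions $P,Q$ on $\mathcal{X}$ and a class $\mathcal{F}$ of real functions on $\mathcal{X}$, the $\mathcal{F}$-restricted error ratio is $$\tau(P,Q,\mathcal{F})=\sup_{f,g\in\mathcal{F}}\frac{\mathbb{E}_{x\sim Q}[(f(x)-g(x))^2]}{\mathbb{E}_{x\sim P}[(f(x)-g(x))^2]},$$ with the convention $0/0=0$ (a ratio with zero denominator and positive numerator is $+\infty$). $\frac12(P+Q)$ denotes the equal mixture of $P$ and $Q$. *)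

theory Defs
  imports "HOL-Probability.Probability"
begin

definition err_ratio :: "real \<Rightarrow> real \<Rightarrow> ereal" where
  "err_ratio a b = (if b = 0 then (if a = 0 then 0 else \<infinity>) else ereal (a / b))"

definition restricted_error_ratio ::
  "'a measure \<Rightarrow> 'a measure \<Rightarrow> ('a \<Rightarrow> real) set \<Rightarrow> ereal" where
  "restricted_error_ratio P Q F =
     (SUP fg \<in> F \<times> F. err_ratio (\<integral>x. (fst fg x - snd fg x)\<^sup>2 \<partial>Q)
                                (\<integral>x. (fst fg x - snd fg x)\<^sup>2 \<partial>P))"

definition mix_expectation :: "'a measure \<Rightarrow> 'a measure \<Rightarrow> ('a \<Rightarrow> real) \<Rightarrow> real" where
  "mix_expectation P Q h = (1/2) * (\<integral>x. h x \<partial>P) + (1/2) * (\<integral>x. h x \<partial>Q)"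

end

theory Submission
  imports Defs
begin

lemma sq_int:
  fixes g h :: "'a \<Rightarrow> real"
  assumes "integrable M (\<lambda>x. (g x)\<^sup>2)" "integrable M (\<lambda>x. (h x)\<^sup>2)"
    "g \<in> borel_measurable M" "h \<in> borel_measurable M"
  shows "integrable M (\<lambda>x. (g x - h x)\<^sup>2)"
proof (rule Bochner_Integration.integrable_bound[where f="\<lambda>x. 2*(g x)\<^sup>2 + 2*(h x)\<^sup>2"])
  show "integrable M (\<lambda>x. 2*(g x)\<^sup>2 + 2*(h x)\<^sup>2)" using assms by auto
  show "(\<lambda>x. (g x - h x)\<^sup>2) \<in> borel_measurable M" using assms by measurable
  show "AE x in M. norm ((g x - h x)\<^sup>2) \<le> norm (2*(g x)\<^sup>2 + 2*(h x)\<^sup>2)"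
  proof (rule AE_I2)
    fix x
    have "(g x - h x)\<^sup>2 \<le> 2*(g x)\<^sup>2 + 2*(h x)\<^sup>2"
      using sum_squares_ge_zero[of "g x + h x" 0] by (simp add: power2_eq_square algebra_simps)
    then show "norm ((g x - h x)\<^sup>2) \<le> norm (2*(g x)\<^sup>2 + 2*(h x)\<^sup>2)" by simp
  qed
qed

lemma tri:
  fixes a b c :: "'a \<Rightarrow> real"
  assumes "integrable M (\<lambda>x. (a x)\<^sup>2)" "integrable M (\<lambda>x. (b x)\<^sup>2)" "integrable M (\<lambda>x. (c x)\<^sup>2)"
    "a \<in> borel_measurable M" "b \<in> borel_measurable M" "c \<in> borel_measurable M"
  shows "(\<integral>x. (a x - c x)\<^sup>2 \<partial>M) \<le> 2 * (\<integral>x. (a x - b x)\<^sup>2 \<partial>M) + 2 * (\<integral>x. (b x - c x)\<^sup>2 \<partial>M)"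
proof -
  have i1: "integrable M (\<lambda>x. (a x - c x)\<^sup>2)" using sq_int assms by blast
  have i2: "integrable M (\<lambda>x. (a x - b x)\<^sup>2)" using sq_int assms by blast
  have i3: "integrable M (\<lambda>x. (b x - c x)\<^sup>2)" using sq_int assms by blast
  have "(\<integral>x. (a x - c x)\<^sup>2 \<partial>M) \<le> (\<integral>x. 2*(a x - b x)\<^sup>2 + 2*(b x - c x)\<^sup>2 \<partial>M)"
  proof (rule integral_mono)
    show "integrable M (\<lambda>x. 2*(a x - b x)\<^sup>2 + 2*(b x - c x)\<^sup>2)" using i2 i3 by auto
    fix x
    show "(a x - c x)\<^sup>2 \<le> 2*(a x - b x)\<^sup>2 + 2*(b x - c x)\<^sup>2"
      using sum_squares_ge_zero[of "a x - 2 * b x + c x" 0] by (simp add: power2_eq_square algebra_simps)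
  qed (rule i1)
  also have "\<dots> = 2 * (\<integral>x. (a x - b x)\<^sup>2 \<partial>M) + 2 * (\<integral>x. (b x - c x)\<^sup>2 \<partial>M)"
    using i2 i3 by simp
  finally show ?thesis .
qed

theorem mainTheorem1:
  fixes P Q :: "'a measure" and F :: "('a \<Rightarrow> real) set" and y :: "'a \<Rightarrow> real"
    and fstar :: "'a \<Rightarrow> real" and eps :: real
  assumes "prob_space P" and "prob_space Q" and "sets Q = sets P"
    and "y \<in> borel_measurable P"
    and "integrable P (\<lambda>x. (y x)\<^sup>2)" and "integrable Q (\<lambda>x. (y x)\<^sup>2)"
    and "\<And>f. f \<in> F \<Longrightarrow> f \<in> borel_measurable P"
    and "\<And>f. f \<in> F \<Longrightarrow> integrable P (\<lambda>x. (f x)\<^sup>2)"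
    and "\<And>f. f \<in> F \<Longrightarrow> integrable Q (\<lambda>x. (f x)\<^sup>2)"
    and "restricted_error_ratio P Q F \<noteq> \<infinity>"
    and "fstar \<in> F" and "eps \<ge> 0"
    and "mix_expectation P Q (\<lambda>x. (y x - fstar x)\<^sup>2) \<le> eps"
  shows "\<forall>f \<in> F.
    (\<integral>x. (y x - f x)\<^sup>2 \<partial>Q)
      \<le> (8 * real_of_ereal (restricted_error_ratio P Q F) + 4) * eps
         + 4 * real_of_ereal (restricted_error_ratio P Q F) * (\<integral>x. (y x - f x)\<^sup>2 \<partial>P)"
proof
  fix f assume fF: "f \<in> F"
  define T where "T = restricted_error_ratio P Q F"
  have mQ: "\<And>g. g \<in> borel_measurable P \<Longrightarrow> g \<in> borel_measurable Q"
    using measurable_cong_sets[OF assms(3) refl] by blast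
  have le: "\<And>g h. g \<in> F \<Longrightarrow> h \<in> F \<Longrightarrow> err_ratio (\<integral>x. (g x - h x)\<^sup>2 \<partial>Q) (\<integral>x. (g x - h x)\<^sup>2 \<partial>P) \<le> T"
    unfolding T_def restricted_error_ratio_def
  proof -
    fix g h assume "g \<in> F" "h \<in> F"
    then have "(g,h) \<in> F \<times> F" by simp
    then show "err_ratio (\<integral>x. (g x - h x)\<^sup>2 \<partial>Q) (\<integral>x. (g x - h x)\<^sup>2 \<partial>P) \<le> (SUP fg \<in> F \<times> F. err_ratio (\<integral>x. (fst fg x - snd fg x)\<^sup>2 \<partial>Q)
                                (\<integral>x. (fst fg x - snd fg x)\<^sup>2 \<partial>P))"
      by (rule SUP_upper2) simp
  qed
  have "err_ratio 0 0 \<le> T" using le[OF assms(11) assms(11)] by simp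
  hence T0: "0 \<le> T" by (simp add: err_ratio_def)
  define t where "t = real_of_ereal T"
  have Tt: "T = ereal t" using T0 assms(10) unfolding t_def T_def
    by (cases "restricted_error_ratio P Q F") auto
  have t0: "t \<ge> 0" using T0 Tt by simp
  have key: "(\<integral>x. (fstar x - f x)\<^sup>2 \<partial>Q) \<le> t * (\<integral>x. (fstar x - f x)\<^sup>2 \<partial>P)"
  proof -
    let ?a = "\<integral>x. (fstar x - f x)\<^sup>2 \<partial>Q" and ?b = "\<integral>x. (fstar x - f x)\<^sup>2 \<partial>P"
    have r: "err_ratio ?a ?b \<le> ereal t" using le[OF assms(11) fF] Tt by simp
    have b0: "?b \<ge> 0" by simp
    show ?thesis
    proof (cases "?b = 0")
      case True
      then have "?a = 0" using r by (auto simp: err_ratio_def split: if_splits)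
      then show ?thesis using True by simp
    next
      case False
      then have "?a / ?b \<le> t" using r by (simp add: err_ratio_def)
      then show ?thesis using False b0 by (simp add: divide_le_eq)
    qed
  qed
  have mf: "f \<in> borel_measurable P" "fstar \<in> borel_measurable P" using assms(7) fF assms(11) by auto
  have Q1: "(\<integral>x. (y x - f x)\<^sup>2 \<partial>Q) \<le> 2 * (\<integral>x. (y x - fstar x)\<^sup>2 \<partial>Q) + 2 * (\<integral>x. (fstar x - f x)\<^sup>2 \<partial>Q)"
    by (rule tri) (use assms fF mf mQ in auto)
  have P1: "(\<integral>x. (fstar x - f x)\<^sup>2 \<partial>P) \<le> 2 * (\<integral>x. (fstar x - y x)\<^sup>2 \<partial>P) + 2 * (\<integral>x. (y x - f x)\<^sup>2 \<partial>P)"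
    by (rule tri) (use assms fF mf in auto)
  have sym: "(\<integral>x. (fstar x - y x)\<^sup>2 \<partial>P) = (\<integral>x. (y x - fstar x)\<^sup>2 \<partial>P)"
    by (simp add: power2_commute)
  have nP: "(\<integral>x. (y x - fstar x)\<^sup>2 \<partial>P) \<ge> 0" and nQ: "(\<integral>x. (y x - fstar x)\<^sup>2 \<partial>Q) \<ge> 0" by simp_all
  have mix: "(\<integral>x. (y x - fstar x)\<^sup>2 \<partial>P) + (\<integral>x. (y x - fstar x)\<^sup>2 \<partial>Q) \<le> 2 * eps"
    using assms(13) unfolding mix_expectation_def by simp
  have e1: "(\<integral>x. (y x - fstar x)\<^sup>2 \<partial>P) \<le> 2*eps" "(\<integral>x. (y x - fstar x)\<^sup>2 \<partial>Q) \<le> 2*eps"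
    using mix nP nQ by linarith+
  have "t * (\<integral>x. (fstar x - f x)\<^sup>2 \<partial>P) \<le> t * (2 * (2*eps) + 2 * (\<integral>x. (y x - f x)\<^sup>2 \<partial>P))"
    using P1 sym e1 t0 by (intro mult_left_mono) auto
  then show "(\<integral>x. (y x - f x)\<^sup>2 \<partial>Q)
      \<le> (8 * real_of_ereal (restricted_error_ratio P Q F) + 4) * eps
         + 4 * real_of_ereal (restricted_error_ratio P Q F) * (\<integral>x. (y x - f x)\<^sup>2 \<partial>P)"
    using Q1 key e1 unfolding t_def[unfolded T_def, symmetric]
    by (simp add: algebra_simps)
qed

end
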